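(* Let $D\subseteq\mathbb{R}^n$ be nonempty, convex, closed and bounded, and let $f:\mathbb{R}^n\to\mathbb{R}$ be continuously differentiable. Let $\{x^k\}$ be generated by Method (CGMS) (described in the context) and suppose the method does not terminate, so that $\{x^k\}$ is infinite. Then: (i) the sequence $\{x^k\}$ has a limit point which belongs to $D^0$; (ii) if, in addition, $f$ is pseudo-convex on $D$, then all limit points of $\{x^k\}$ belong to $D^*$, and $\lim_{k\to\infty} f(x^k)=f^*$.
   Context: Notation: $f'(x)$ is the gradient of $f$; $\langle\cdot,\cdot\rangle$ the Euclidean inner product. The problem is $\min_{x\in D} f(x)$; $f^*=\inf_{x\in D}f(x)$ and $D^*$ is its solution set. $D^0$ is the set of stationary points, i.e. of $x^*\in D$ with $\langle f'(x^* ),x-x^*\rangle\ge 0$ for all $x\in D$. $Z(x)$ denotes the set of minimizers of $y\mapsto\langle f'(x),y\rangle$ over $y\in D$. A differentiable $\varphi$ is pseudo-convex on $D$ if for all $x,y\in D$, $\langle\varphi'(x),y-x\rangle\ge0$ implies $\varphi(y)\ge\varphi(x)$. Method (CGMS): Choose $x^0\in D$, $\beta\in(0,1)$, and a sequence of numbers $\tau_l\in(0,1)$, $l=0,1,\dots$, with $\tau_l\to0$. Set $k=0$, $l=0$ and choose $\lambda_0\in(0,\tau_0]$. Iteration $k$: (Step 1) find $y^k\in Z(x^k)$, set $d^k=y^k-x^k$; if $\langle f'(x^k),d^k\rangle=0$, stop. (Step 2) Set $x^{k+1}=x^k+\lambda_k d^k$. If $f(x^{k+1})\le f(x^k)+\beta\lambda_k\langle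 f'(x^k),d^k\rangle$, choose any $\lambda_{k+1}\in[\lambda_k,\tau_l]$ (with $l$ unchanged). Otherwise set $\lambda'_{k+1}=\min\{\lambda_k,\tau_{l+1}\}$, replace $l$ by $l+1$, and choose any $\lambda_{k+1}\in(0,\lambda'_{k+1}]$. Set $k=k+1$ and return to Step 1. *)

theory Defs
  imports "HOL-Analysis.Analysis"
begin

definition lin_min_set :: "'a::euclidean_space set \<Rightarrow> ('a \<Rightarrow> 'a) \<Rightarrow> 'a \<Rightarrow> 'a set" where
  "lin_min_set D f' x = {y \<in> D. \<forall>z\<in>D. f' x \<bullet> y \<le> f' x \<bullet> z}"

definition stationary_set :: "'a::euclidean_space set \<Rightarrow> ('a \<Rightarrow> 'a) \<Rightarrow> 'a set" where
  "stationary_set D f' = {xs \<in> D. \<forall>z\<in>D. f' xs \<bullet> (z - xs) \<ge> 0}"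

definition opt_value :: "'a set \<Rightarrow> ('a \<Rightarrow> real) \<Rightarrow> real" where
  "opt_value D f = (INF z\<in>D. f z)"

definition solution_set :: "'a set \<Rightarrow> ('a \<Rightarrow> real) \<Rightarrow> 'a set" where
  "solution_set D f = {z \<in> D. f z = opt_value D f}"

definition pseudo_convex_on :: "'a::euclidean_space set \<Rightarrow> ('a \<Rightarrow> real) \<Rightarrow> ('a \<Rightarrow> 'a) \<Rightarrow> bool" where
  "pseudo_convex_on D f f' \<longleftrightarrow>
     (\<forall>x\<in>D. \<forall>y\<in>D. f' x \<bullet> (y - x) \<ge> 0 \<longrightarrow> f y \<ge> f x)"

definition limit_point_seq :: "(nat \<Rightarrow> 'a::topological_space) \<Rightarrow> 'a \<Rightarrow> bool" where
  "limit_point_seq x p \<longleftrightarrow> (\<exists>r. strict_mono r \<and> (x \<circ> r) \<longlonglongrightarrow> p)"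

text \<open>An infinite (non-terminating) run of Method CGMS. x k = x^k, y k = y^k,
  lam k = lambda_k, l k = the value of the counter l when iteration k starts.\<close>
definition cgms_run ::
  "'a::euclidean_space set \<Rightarrow> ('a \<Rightarrow> real) \<Rightarrow> ('a \<Rightarrow> 'a) \<Rightarrow> real \<Rightarrow> (nat \<Rightarrow> real)
   \<Rightarrow> (nat \<Rightarrow> 'a) \<Rightarrow> (nat \<Rightarrow> 'a) \<Rightarrow> (nat \<Rightarrow> real) \<Rightarrow> (nat \<Rightarrow> nat) \<Rightarrow> bool" where
  "cgms_run D f f' \<beta> \<tau> x y lam l \<longleftrightarrow>
     x 0 \<in> D \<and> 0 < \<beta> \<and> \<beta> < 1 \<and> (\<forall>i. 0 < \<tau> i \<and> \<tau> i < 1) \<and> \<tau> \<longlonglongrightarrow> 0 \<and>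
     l 0 = 0 \<and> 0 < lam 0 \<and> lam 0 \<le> \<tau> 0 \<and>
     (\<forall>k. y k \<in> lin_min_set D f' (x k)
        \<and> f' (x k) \<bullet> (y k - x k) \<noteq> 0
        \<and> x (Suc k) = x k + lam k *\<^sub>R (y k - x k)
        \<and> (if f (x (Suc k)) \<le> f (x k) + \<beta> * lam k * (f' (x k) \<bullet> (y k - x k))
           then l (Suc k) = l k \<and> lam k \<le> lam (Suc k) \<and> lam (Suc k) \<le> \<tau> (l k)
           else l (Suc k) = Suc (l k) \<and> 0 < lam (Suc k)
                \<and> lam (Suc k) \<le> min (lam k) (\<tau> (Suc (l k)))))"

end

theory Submission imports Defs begin

lemma freq_subseq:
  fixes P :: "nat \<Rightarrow> nat \<Rightarrow> bool"
  assumes "\<And>n N. \<exists>k\<ge>N. P n k"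
  shows "\<exists>r. strict_mono r \<and> (\<forall>n. P n (r n))"
proof -
  have "\<exists>r. \<forall>n. P n (r n) \<and> r n < r (Suc n)"
  proof (rule dependent_nat_choice)
    show "\<exists>k. P 0 k" using assms by blast
    fix k n assume "P n k"
    from assms obtain j where "j \<ge> Suc k" "P (Suc n) j" by blast
    then show "\<exists>j. P (Suc n) j \<and> k < j" by auto
  qed
  then obtain r where "\<forall>n. P n (r n) \<and> r n < r (Suc n)" by blast
  then show ?thesis by (metis strict_mono_Suc_iff)
qed

locale cg =
  fixes D :: "'a::euclidean_space set" and f :: "'a \<Rightarrow> real" and f' :: "'a \<Rightarrow> 'a"
    and \<beta> :: real and \<tau> :: "nat \<Rightarrow> real"
    and x y :: "nat \<Rightarrow> 'a" and lam :: "nat \<Rightarrow> real" and l :: "nat \<Rightarrow> nat"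
  assumes ne: "D \<noteq> {}" and cvx: "convex D" and cl: "closed D" and bd: "bounded D"
    and der: "\<And>z. (f has_derivative (\<lambda>h. f' z \<bullet> h)) (at z)"
    and cont: "continuous_on UNIV f'"
    and run: "cgms_run D f f' \<beta> \<tau> x y lam l"
begin

definition gap where "gap k = f' (x k) \<bullet> (y k - x k)"
definition succ where "succ k \<longleftrightarrow> f (x (Suc k)) \<le> f (x k) + \<beta> * lam k * gap k"

lemma cpt: "compact D" using bd cl compact_eq_bounded_closed by blast

lemma fcont: "continuous_on UNIV f"
  by (meson continuous_at_imp_continuous_on der has_derivative_continuous)

lemma fisc: "isCont f z" using fcont by (simp add: continuous_on_eq_continuous_at)
lemma f'isc: "isCont f' z" using cont by (simp add: continuous_on_eq_continuous_at)

lemma beta: "0 < \<beta>" "\<beta> < 1" using run by (auto simp: cgms_run_def)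
lemma tau: "0 < \<tau> i" "\<tau> i < 1" "\<tau> \<longlonglongrightarrow> 0" using run by (auto simp: cgms_run_def)

lemma stp: "y k \<in> lin_min_set D f' (x k)" "gap k \<noteq> 0" "x (Suc k) = x k + lam k *\<^sub>R (y k - x k)"
  "succ k \<Longrightarrow> l (Suc k) = l k \<and> lam k \<le> lam (Suc k) \<and> lam (Suc k) \<le> \<tau> (l k)"
  "\<not> succ k \<Longrightarrow> l (Suc k) = Suc (l k) \<and> 0 < lam (Suc k) \<and> lam (Suc k) \<le> min (lam k) (\<tau> (Suc (l k)))"
proof -
  have H: "y k \<in> lin_min_set D f' (x k)
        \<and> f' (x k) \<bullet> (y k - x k) \<noteq> 0
        \<and> x (Suc k) = x k + lam k *\<^sub>R (y k - x k)
        \<and> (if f (x (Suc k)) \<le> f (x k) + \<beta> * lam k * (f' (x k) \<bullet> (y k - x k))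
           then l (Suc k) = l k \<and> lam k \<le> lam (Suc k) \<and> lam (Suc k) \<le> \<tau> (l k)
           else l (Suc k) = Suc (l k) \<and> 0 < lam (Suc k)
                \<and> lam (Suc k) \<le> min (lam k) (\<tau> (Suc (l k))))"
    using run unfolding cgms_run_def by blast
  show "y k \<in> lin_min_set D f' (x k)" "gap k \<noteq> 0" "x (Suc k) = x k + lam k *\<^sub>R (y k - x k)"
    using H by (auto simp: gap_def)
  show "succ k \<Longrightarrow> l (Suc k) = l k \<and> lam k \<le> lam (Suc k) \<and> lam (Suc k) \<le> \<tau> (l k)"
    using H unfolding succ_def gap_def by presburger
  show "\<not> succ k \<Longrightarrow> l (Suc k) = Suc (l k) \<and> 0 < lam (Suc k) \<and> lam (Suc k) \<le> min (lam k) (\<tau> (Suc (l k)))"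
    using H unfolding succ_def gap_def by presburger
qed

lemma yD: "y k \<in> D" using stp(1) by (simp add: lin_min_set_def)

lemma inv: "x k \<in> D \<and> 0 < lam k \<and> lam k \<le> \<tau> (l k)"
proof (induction k)
  case 0 then show ?case using run by (auto simp: cgms_run_def)
next
  case (Suc k)
  have lt1: "lam k < 1" using Suc tau(2)[of "l k"] by linarith
  have "x (Suc k) = (1 - lam k) *\<^sub>R x k + lam k *\<^sub>R y k" using stp(3)[of k] by (simp add: algebra_simps)
  also have "\<dots> \<in> D" using Suc lt1 yD[of k] cvx by (intro convexD) auto
  finally show ?case using Suc stp(4,5)[of k] by (cases "succ k") auto
qed

lemma xD: "x k \<in> D" using inv by blast
lemma lampos: "0 < lam k" using inv by blast
lemma lamle: "lam k \<le> \<tau> (l k)" using inv by blast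

lemma gapneg: "gap k < 0"
proof -
  have "f' (x k) \<bullet> y k \<le> f' (x k) \<bullet> x k" using stp(1)[of k] xD[of k] by (auto simp: lin_min_set_def)
  then have "gap k \<le> 0" by (simp add: gap_def inner_diff_right)
  then show ?thesis using stp(2)[of k] by linarith
qed

lemma gap_le: "z \<in> D \<Longrightarrow> gap k \<le> f' (x k) \<bullet> (z - x k)"
  using stp(1)[of k] by (auto simp: lin_min_set_def gap_def inner_diff_right)

lemma lmono: "l k \<le> l (Suc k)" using stp(4,5)[of k] by (cases "succ k") auto

lemma diamR: obtains R where "R \<ge> 0" "\<And>u v. u \<in> D \<Longrightarrow> v \<in> D \<Longrightarrow> norm (v - u) \<le> R"
proof -
  obtain B where B: "\<forall>z\<in>D. norm z \<le> B" using bd bounded_iff by blast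
  obtain z0 where "z0 \<in> D" using ne by blast
  then have "B \<ge> 0" using B norm_ge_zero order_trans by blast
  moreover have "norm (v - u) \<le> 2 * B" if "u \<in> D" "v \<in> D" for u v
  proof -
    have "norm v \<le> B" "norm u \<le> B" using B that by auto
    then show ?thesis using norm_triangle_ineq4[of v u] by linarith
  qed
  ultimately show ?thesis using that[of "2*B"] by auto
qed

lemma armijo:
  assumes dp: "\<delta> > 0"
  shows "\<exists>\<eta>>0. \<forall>u\<in>D. \<forall>v\<in>D. \<forall>t. f' u \<bullet> (v - u) \<le> -\<delta> \<longrightarrow> 0 < t \<longrightarrow> t \<le> \<eta> \<longrightarrow>
            f (u + t *\<^sub>R (v - u)) \<le> f u + \<beta> * t * (f' u \<bullet> (v - u))"
proof -
  obtain R where R: "R \<ge> 0" "\<And>u v. u \<in> D \<Longrightarrow> v \<in> D \<Longrightarrow> norm (v - u) \<le> R" using diamR by blast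
  have uc: "uniformly_continuous_on D f'"
    using compact_uniformly_continuous cpt cont continuous_on_subset by blast
  define e where "e = (1 - \<beta>) * \<delta> / (R + 1)"
  have ep: "e > 0" using beta dp R by (simp add: e_def)
  obtain \<rho> where rp: "\<rho> > 0" and rho: "\<forall>a\<in>D. \<forall>b\<in>D. dist b a < \<rho> \<longrightarrow> dist (f' b) (f' a) < e"
    using uc ep unfolding uniformly_continuous_on_def by blast
  define \<eta> where "\<eta> = min 1 (\<rho> / (R + 1))"
  have "\<eta> > 0" using rp R by (simp add: \<eta>_def)
  moreover have "f (u + t *\<^sub>R (v - u)) \<le> f u + \<beta> * t * (f' u \<bullet> (v - u))"
    if u: "u \<in> D" and v: "v \<in> D" and g: "f' u \<bullet> (v - u) \<le> -\<delta>" and t: "0 < t" "t \<le> \<eta>" for u v t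
  proof -
    define d where "d = v - u"
    have dR: "norm d \<le> R" using R u v by (simp add: d_def)
    have deriv: "((\<lambda>s. f (u + s *\<^sub>R d)) has_real_derivative (f' (u + s *\<^sub>R d) \<bullet> d)) (at s)" for s
      unfolding has_field_derivative_def
      by (rule has_derivative_eq_rhs[OF has_derivative_compose[OF _ der]])
         (auto intro!: derivative_eq_intros simp: inner_scaleR_right)
    obtain z where z: "0 < z" "z < t" and mv: "f (u + t *\<^sub>R d) - f (u + 0 *\<^sub>R d) = (t - 0) * (f' (u + z *\<^sub>R d) \<bullet> d)"
      using MVT2[of 0 t "\<lambda>s. f (u + s *\<^sub>R d)", OF t(1) deriv] by blast
    have t1: "t \<le> 1" using t by (simp add: \<eta>_def)
    have "u + z *\<^sub>R d = (1 - z) *\<^sub>R u + z *\<^sub>R v" by (simp add: d_def algebra_simps)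
    also have "\<dots> \<in> D" using u v z t1 cvx by (intro convexD) auto
    finally have xiD: "u + z *\<^sub>R d \<in> D" .
    have "dist (u + z *\<^sub>R d) u = z * norm d" using z by (simp add: dist_norm)
    also have "\<dots> \<le> t * R" using z dR by (intro mult_mono) auto
    also have "\<dots> \<le> \<rho> / (R + 1) * R" using t R by (intro mult_right_mono) (auto simp: \<eta>_def)
    also have "\<dots> < \<rho>" using rp R by (simp add: field_simps)
    finally have "dist (f' (u + z *\<^sub>R d)) (f' u) < e" using rho xiD u by blast
    then have ne: "norm (f' (u + z *\<^sub>R d) - f' u) \<le> e" by (simp add: dist_norm)
    have "(f' (u + z *\<^sub>R d) - f' u) \<bullet> d \<le> norm (f' (u + z *\<^sub>R d) - f' u) * norm d"
      using norm_cauchy_schwarz by blast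
    also have "\<dots> \<le> e * R" using ne dR ep by (intro mult_mono) auto
    also have "\<dots> \<le> (1 - \<beta>) * \<delta>"
    proof -
      have "e * R = (1 - \<beta>) * \<delta> * (R / (R + 1))" by (simp add: e_def)
      also have "\<dots> \<le> (1 - \<beta>) * \<delta> * 1" using beta dp R by (intro mult_left_mono) auto
      finally show ?thesis by simp
    qed
    finally have "f' (u + z *\<^sub>R d) \<bullet> d \<le> f' u \<bullet> d + (1 - \<beta>) * \<delta>" by (simp add: inner_diff_left)
    also have "\<dots> \<le> \<beta> * (f' u \<bullet> d)"
    proof -
      have "(1 - \<beta>) * \<delta> \<le> (1 - \<beta>) * (- (f' u \<bullet> d))" using g beta by (intro mult_left_mono) (auto simp: d_def)
      then show ?thesis by (simp add: algebra_simps)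
    qed
    finally have "t * (f' (u + z *\<^sub>R d) \<bullet> d) \<le> t * (\<beta> * (f' u \<bullet> d))" using t by (intro mult_left_mono) auto
    then show ?thesis using mv by (simp add: d_def algebra_simps)
  qed
  ultimately show ?thesis by blast
qed

lemma stat_lim:
  assumes X: "\<And>n. X n \<in> D" and Xp: "X \<longlonglongrightarrow> p" and Y: "Y \<longlonglongrightarrow> (0::real)"
    and le: "\<And>n z. z \<in> D \<Longrightarrow> Y n \<le> f' (X n) \<bullet> (z - X n)"
  shows "p \<in> stationary_set D f'"
proof -
  have pD: "p \<in> D" using closed_sequentially[OF cl X Xp] .
  have "0 \<le> f' p \<bullet> (z - p)" if z: "z \<in> D" for z
  proof (rule tendsto_le[OF trivial_limit_sequentially _ Y])
    show "(\<lambda>n. f' (X n) \<bullet> (z - X n)) \<longlonglongrightarrow> f' p \<bullet> (z - p)"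
      by (intro tendsto_intros isCont_tendsto_compose[OF f'isc Xp] Xp)
    show "\<forall>\<^sub>F n in sequentially. Y n \<le> f' (X n) \<bullet> (z - X n)" using le z by auto
  qed
  then show ?thesis using pD by (auto simp: stationary_set_def)
qed

lemma fbelow: obtains m where "\<And>z. z \<in> D \<Longrightarrow> m \<le> f z"
  using continuous_attains_inf[OF cpt ne continuous_on_subset[OF fcont]] by blast

lemma descent_False:
  assumes c: "c > 0" and dec: "\<And>k. k \<ge> M \<Longrightarrow> f (x (Suc k)) \<le> f (x k) - c"
  shows False
proof -
  obtain m where m: "\<And>z. z \<in> D \<Longrightarrow> m \<le> f z" using fbelow by blast
  have I: "f (x (M + j)) \<le> f (x M) - real j * c" for j
  proof (induction j)
    case 0 then show ?case by simp
  next
    case (Suc j) then show ?case using dec[of "M + j"] by (simp add: algebra_simps)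
  qed
  obtain j where "f (x M) - m < real j * c" using ex_less_of_nat_mult[OF c] by blast
  then show False using I[of j] m[OF xD[of "M + j"]] by linarith
qed

lemma lmono': "k \<le> k' \<Longrightarrow> l k \<le> l k'"
  using lmono by (metis lift_Suc_mono_le)

lemma inf_fail:
  assumes "\<And>M. \<exists>k\<ge>M. \<not> succ k"
  shows "lam \<longlonglongrightarrow> 0"
proof -
  have "\<exists>K. \<forall>k\<ge>K. N \<le> l k" for N
  proof (induction N)
    case 0 then show ?case by simp
  next
    case (Suc N)
    then obtain K where K: "\<forall>k\<ge>K. N \<le> l k" by blast
    obtain k where k: "k \<ge> K" "\<not> succ k" using assms by blast
    have "l (Suc k) = Suc (l k)" using stp(5)[OF k(2)] by simp
    then have "\<forall>k'\<ge>Suc k. Suc N \<le> l k'" using K k lmono' by (metis Suc_le_mono order_trans)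
    then show ?case by blast
  qed
  then have "filterlim l at_top sequentially"
    unfolding filterlim_at_top eventually_sequentially by blast
  then have t: "(\<lambda>k. \<tau> (l k)) \<longlonglongrightarrow> 0" using filterlim_compose[OF tau(3)] by blast
  show ?thesis
    by (rule tendsto_sandwich[OF _ _ tendsto_const t]) (use lampos lamle in \<open>auto intro!: always_eventually less_imp_le\<close>)
qed

lemma fin_fail:
  assumes "\<And>k. k \<ge> M \<Longrightarrow> succ k" and "k \<ge> M"
  shows "lam M \<le> lam k"
  using assms(2)
proof (induction k rule: dec_induct)
  case base then show ?case by simp
next
  case (step k) then show ?case using assms(1) stp(4)[of k] by (meson order_trans)
qed

lemma dec_step:
  assumes "succ k" "lam M \<le> lam k" "gap k \<le> - \<delta>" "\<delta> > 0"
  shows "f (x (Suc k)) \<le> f (x k) - \<beta> * lam M * \<delta>"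
proof -
  have "lam k * gap k \<le> lam M * gap k" using assms(2) gapneg[of k] by (intro mult_right_mono_neg) auto
  also have "\<dots> \<le> lam M * (- \<delta>)" using assms(3) lampos[of M] by (intro mult_left_mono) auto
  finally have "\<beta> * (lam k * gap k) \<le> \<beta> * (lam M * (- \<delta>))" using beta by (intro mult_left_mono) auto
  then show ?thesis using assms(1) unfolding succ_def by (simp add: algebra_simps)
qed

lemma armijo_step:
  assumes "\<delta> > 0"
  obtains \<eta> where "\<eta> > 0" "\<And>k. gap k \<le> -\<delta> \<Longrightarrow> lam k \<le> \<eta> \<Longrightarrow> succ k"
proof -
  obtain \<eta> where e: "\<eta> > 0" and A: "\<forall>u\<in>D. \<forall>v\<in>D. \<forall>t. f' u \<bullet> (v - u) \<le> -\<delta> \<longrightarrow> 0 < t \<longrightarrow> t \<le> \<eta> \<longrightarrow>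
            f (u + t *\<^sub>R (v - u)) \<le> f u + \<beta> * t * (f' u \<bullet> (v - u))"
    using armijo[OF assms] by blast
  have "succ k" if "gap k \<le> -\<delta>" "lam k \<le> \<eta>" for k
    using A xD[of k] yD[of k] that lampos[of k] stp(3)[of k] unfolding succ_def gap_def by auto
  then show ?thesis using that e by blast
qed

lemma part1: "\<exists>p. limit_point_seq x p \<and> p \<in> stationary_set D f'"
proof (rule ccontr)
  assume nc: "\<not> ?thesis"
  have "\<exists>n N. \<forall>k\<ge>N. gap k \<le> - inverse (real (Suc n))"
  proof (rule ccontr)
    assume "\<not> ?thesis"
    then have "\<And>n N. \<exists>k\<ge>N. gap k > - inverse (real (Suc n))" by (auto simp: not_le)
    from freq_subseq[of "\<lambda>n k. gap k > - inverse (real (Suc n))", OF this] obtain r where r: "strict_mono r" "\<And>n. gap (r n) > - inverse (real (Suc n))" by blast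
    obtain p r2 where p: "p \<in> D" and r2: "strict_mono r2" "((x \<circ> r) \<circ> r2) \<longlonglongrightarrow> p"
      using cpt xD unfolding compact_def by (metis comp_apply)
    have "p \<in> stationary_set D f'"
    proof (rule stat_lim[of "x \<circ> r \<circ> r2" p "\<lambda>n. - inverse (real (Suc n))"])
      show "\<And>n. (x \<circ> r \<circ> r2) n \<in> D" using xD by simp
      show "(x \<circ> r \<circ> r2) \<longlonglongrightarrow> p" by fact
      show "(\<lambda>n. - inverse (real (Suc n))) \<longlonglongrightarrow> 0"
        using tendsto_minus[OF LIMSEQ_inverse_real_of_nat] by simp
      fix n z assume z: "z \<in> D"
      have a: "inverse (real (Suc (r2 n))) \<le> inverse (real (Suc n))"
        using seq_suble[OF r2(1), of n] by (simp add: field_simps)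
      then show "- inverse (real (Suc n)) \<le> f' ((x \<circ> r \<circ> r2) n) \<bullet> (z - (x \<circ> r \<circ> r2) n)"
        using a r(2)[of "r2 n"] gap_le[OF z, of "r (r2 n)"] unfolding comp_apply by linarith
    qed
    moreover have "limit_point_seq x p"
      unfolding limit_point_seq_def using r2 r(1) strict_mono_o by (metis o_assoc)
    ultimately show False using nc by blast
  qed
  then obtain n N where gN: "\<And>k. k \<ge> N \<Longrightarrow> gap k \<le> - inverse (real (Suc n))" by blast
  define \<delta> where "\<delta> = inverse (real (Suc n))"
  have dp: "\<delta> > 0" by (simp add: \<delta>_def)
  show False
  proof (cases "\<forall>M. \<exists>k\<ge>M. \<not> succ k")
    case True
    then have "lam \<longlonglongrightarrow> 0" using inf_fail by blast
    obtain \<eta> where e: "\<eta> > 0" and A: "\<And>k. gap k \<le> -\<delta> \<Longrightarrow> lam k \<le> \<eta> \<Longrightarrow> succ k"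
      using armijo_step[OF dp] by blast
    obtain K where K: "\<And>k. k \<ge> K \<Longrightarrow> lam k < \<eta>"
      using order_tendstoD(2)[OF \<open>lam \<longlonglongrightarrow> 0\<close> e] unfolding eventually_sequentially by blast
    obtain k where k: "k \<ge> max K N" "\<not> succ k" using True by blast
    then show False using A[of k] K[of k] gN[of k] by (simp add: \<delta>_def)
  next
    case False
    then obtain M where M: "\<And>k. k \<ge> M \<Longrightarrow> succ k" by (auto simp: not_less)
    show False
    proof (rule descent_False[of "\<beta> * lam M * \<delta>" "max M N"])
      show "\<beta> * lam M * \<delta> > 0" using beta lampos dp by simp
      fix k assume "k \<ge> max M N"
      then show "f (x (Suc k)) \<le> f (x k) - \<beta> * lam M * \<delta>"
        using dec_step[OF M fin_fail[OF M] _ dp, of k] gN[of k] by (simp add: \<delta>_def)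
    qed
  qed
qed

lemma fs_le: "z \<in> D \<Longrightarrow> opt_value D f \<le> f z"
proof -
  obtain m where m: "\<And>z. z \<in> D \<Longrightarrow> m \<le> f z" using fbelow by blast
  assume "z \<in> D"
  moreover have "bdd_below (f ` D)" using m by (auto simp: bdd_below_def)
  ultimately show ?thesis unfolding opt_value_def by (simp add: cINF_lower)
qed

lemma succ_dec: "f (x (Suc k)) \<le> f (x k)" if "succ k"
proof -
  have "\<beta> * lam k * gap k \<le> 0"
    using mult_pos_neg[OF mult_pos_pos[OF beta(1) lampos[of k]] gapneg[of k]] by simp
  then show ?thesis using that unfolding succ_def by linarith
qed

lemma lemB:
  assumes pc: "pseudo_convex_on D f f'" and ep: "\<epsilon> > 0"
  shows "\<exists>\<delta>>0. \<forall>k. gap k > -\<delta> \<longrightarrow> f (x k) < opt_value D f + \<epsilon>"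
proof (rule ccontr)
  assume "\<not> ?thesis"
  then have "\<forall>n. \<exists>k. gap k > - inverse (real (Suc n)) \<and> f (x k) \<ge> opt_value D f + \<epsilon>"
    by (metis inverse_positive_iff_positive not_le of_nat_0_less_iff zero_less_Suc)
  then obtain K where K: "\<And>n. gap (K n) > - inverse (real (Suc n))" "\<And>n. f (x (K n)) \<ge> opt_value D f + \<epsilon>"
    by metis
  obtain p r where p: "p \<in> D" and r: "strict_mono r" "((x \<circ> K) \<circ> r) \<longlonglongrightarrow> p"
    using cpt xD unfolding compact_def by (metis comp_apply)
  have ps: "p \<in> stationary_set D f'"
  proof (rule stat_lim[of "x \<circ> K \<circ> r" p "\<lambda>n. - inverse (real (Suc n))"])
    show "\<And>n. (x \<circ> K \<circ> r) n \<in> D" using xD by simp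
    show "(x \<circ> K \<circ> r) \<longlonglongrightarrow> p" by fact
    show "(\<lambda>n. - inverse (real (Suc n))) \<longlonglongrightarrow> 0"
      using tendsto_minus[OF LIMSEQ_inverse_real_of_nat] by simp
    fix n z assume z: "z \<in> D"
    have a: "inverse (real (Suc (r n))) \<le> inverse (real (Suc n))"
      using seq_suble[OF r(1), of n] by (simp add: field_simps)
    then show "- inverse (real (Suc n)) \<le> f' ((x \<circ> K \<circ> r) n) \<bullet> (z - (x \<circ> K \<circ> r) n)"
      using a K(1)[of "r n"] gap_le[OF z, of "K (r n)"] unfolding comp_apply gap_def by linarith
  qed
  have "f p \<le> f z" if "z \<in> D" for z
    using pc ps that unfolding pseudo_convex_on_def stationary_set_def by blast
  then have fp: "f p \<le> opt_value D f" unfolding opt_value_def using ne by (intro cINF_greatest) auto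
  have "(\<lambda>n. f ((x \<circ> K \<circ> r) n)) \<longlonglongrightarrow> f p" by (rule isCont_tendsto_compose[OF fisc r(2)])
  then have "opt_value D f + \<epsilon> \<le> f p"
    by (rule LIMSEQ_le_const) (use K(2) in auto)
  then show False using fp ep by linarith
qed

lemma part2_lim:
  assumes pc: "pseudo_convex_on D f f'"
  shows "(\<lambda>k. f (x k)) \<longlonglongrightarrow> opt_value D f"
proof (rule LIMSEQ_I)
  fix r :: real assume rp: "r > 0"
  define \<epsilon> where "\<epsilon> = r / 2"
  have ep: "\<epsilon> > 0" using rp by (simp add: \<epsilon>_def)
  obtain \<delta> where dp: "\<delta> > 0" and B: "\<And>k. gap k > -\<delta> \<Longrightarrow> f (x k) < opt_value D f + \<epsilon>"
    using lemB[OF pc ep] by blast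
  obtain \<eta> where e: "\<eta> > 0" and A: "\<And>k. gap k \<le> -\<delta> \<Longrightarrow> lam k \<le> \<eta> \<Longrightarrow> succ k"
    using armijo_step[OF dp] by blast
  have goal: "\<exists>no. \<forall>k\<ge>no. f (x k) < opt_value D f + 2 * \<epsilon>"
  proof (cases "\<forall>M. \<exists>k\<ge>M. \<not> succ k")
    case True
    then have lam0: "lam \<longlonglongrightarrow> 0" using inf_fail by blast
    obtain R where R: "R \<ge> 0" "\<And>u v. u \<in> D \<Longrightarrow> v \<in> D \<Longrightarrow> norm (v - u) \<le> R" using diamR by blast
    have uc: "uniformly_continuous_on D f"
      using compact_uniformly_continuous cpt fcont continuous_on_subset by blast
    obtain \<rho> where rhp: "\<rho> > 0" and rho: "\<forall>a\<in>D. \<forall>b\<in>D. dist b a < \<rho> \<longrightarrow> dist (f b) (f a) < \<epsilon>"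
      using uc ep unfolding uniformly_continuous_on_def by blast
    have mp: "min \<eta> (\<rho> / (R + 1)) > 0" using e rhp R by simp
    obtain K where K: "\<And>k. k \<ge> K \<Longrightarrow> lam k < min \<eta> (\<rho> / (R + 1))"
      using order_tendstoD(2)[OF lam0 mp] unfolding eventually_sequentially by blast
    have a: "f (x (Suc k)) \<le> f (x k)" if "k \<ge> K" "f (x k) \<ge> opt_value D f + \<epsilon>" for k
    proof -
      have "gap k \<le> -\<delta>" using B[of k] that by fastforce
      then have "succ k" using A K[OF that(1)] by auto
      then show ?thesis by (rule succ_dec)
    qed
    have b: "f (x (Suc k)) < f (x k) + \<epsilon>" if "k \<ge> K" for k
    proof -
      have "dist (x (Suc k)) (x k) = lam k * norm (y k - x k)"
        using stp(3)[of k] lampos[of k] by (simp add: dist_norm)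
      also have "\<dots> \<le> lam k * (R + 1)"
        using R(2)[OF xD yD, of k k] lampos[of k] by (intro mult_left_mono) auto
      also have "\<dots> < \<rho>" using K[OF that] R by (simp add: field_simps)
      finally have "dist (f (x (Suc k))) (f (x k)) < \<epsilon>" using rho xD by blast
      then show ?thesis by (simp add: dist_real_def abs_less_iff)
    qed
    obtain k0 where k0: "k0 \<ge> K" "\<not> succ k0" using True by blast
    have f0: "f (x k0) < opt_value D f + \<epsilon>"
    proof (rule ccontr)
      assume "\<not> ?thesis"
      then have "gap k0 \<le> -\<delta>" using B[of k0] by fastforce
      then show False using A K[OF k0(1)] k0(2) by auto
    qed
    have "f (x (k0 + j)) < opt_value D f + 2 * \<epsilon>" for j
    proof (induction j)
      case 0 then show ?case using f0 ep by simp
    next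
      case (Suc j)
      have kK: "k0 + j \<ge> K" using k0 by simp
      show ?case
      proof (cases "f (x (k0 + j)) \<ge> opt_value D f + \<epsilon>")
        case True then show ?thesis using a[OF kK] Suc by simp
      next
        case False then show ?thesis using b[OF kK] by simp
      qed
    qed
    then show ?thesis by (metis le_add_diff_inverse)
  next
    case False
    then obtain M where M: "\<And>k. k \<ge> M \<Longrightarrow> succ k" by (auto simp: not_less)
    have "\<exists>k1\<ge>M. f (x k1) < opt_value D f + \<epsilon>"
    proof (rule ccontr)
      assume nk: "\<not> ?thesis"
      have big: "f (x k) \<ge> opt_value D f + \<epsilon>" if "k \<ge> M" for k using nk that by fastforce
      show False
      proof (rule descent_False[of "\<beta> * lam M * \<delta>" M])
        show "\<beta> * lam M * \<delta> > 0" using beta lampos dp by simp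
        fix k assume k: "k \<ge> M"
        have "gap k \<le> -\<delta>" using B[of k] big[OF k] by fastforce
        then show "f (x (Suc k)) \<le> f (x k) - \<beta> * lam M * \<delta>"
          using dec_step[OF M[OF k] fin_fail[OF M k] _ dp] by blast
      qed
    qed
    then obtain k1 where k1: "k1 \<ge> M" "f (x k1) < opt_value D f + \<epsilon>" by blast
    have "f (x k) \<le> f (x k1)" if "k \<ge> k1" for k
      using that
    proof (induction k rule: dec_induct)
      case base then show ?case by simp
    next
      case (step k) then show ?case using succ_dec[OF M, of k] k1(1) by fastforce
    qed
    then have "\<forall>k\<ge>k1. f (x k) < opt_value D f + 2 * \<epsilon>" using k1(2) ep by force
    then show ?thesis by blast
  qed
  then obtain no where no: "\<And>k. k \<ge> no \<Longrightarrow> f (x k) < opt_value D f + 2 * \<epsilon>" by blast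
  show "\<exists>no. \<forall>n\<ge>no. norm (f (x n) - opt_value D f) < r"
  proof (intro exI allI impI)
    fix n assume "n \<ge> no"
    then show "norm (f (x n) - opt_value D f) < r" using no[of n] fs_le[OF xD[of n]] by (simp add: \<epsilon>_def)
  qed
qed

lemma part2_pts:
  assumes pc: "pseudo_convex_on D f f'" and lp: "limit_point_seq x p"
  shows "p \<in> solution_set D f"
proof -
  obtain r where r: "strict_mono r" "(x \<circ> r) \<longlonglongrightarrow> p" using lp unfolding limit_point_seq_def by blast
  have pD: "p \<in> D" using closed_sequentially[OF cl _ r(2)] xD by simp
  have "(\<lambda>n. f ((x \<circ> r) n)) \<longlonglongrightarrow> f p" by (rule isCont_tendsto_compose[OF fisc r(2)])
  moreover have "((\<lambda>k. f (x k)) \<circ> r) \<longlonglongrightarrow> opt_value D f" by (rule LIMSEQ_subseq_LIMSEQ[OF part2_lim[OF pc] r(1)])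
  ultimately have "f p = opt_value D f" by (simp add: LIMSEQ_unique o_def)
  then show ?thesis using pD by (simp add: solution_set_def)
qed

end

theorem theorem3p1:
  fixes D :: "'a::euclidean_space set" and f :: "'a \<Rightarrow> real" and f' :: "'a \<Rightarrow> 'a"
    and \<beta> :: real and \<tau> :: "nat \<Rightarrow> real"
    and x y :: "nat \<Rightarrow> 'a" and lam :: "nat \<Rightarrow> real" and l :: "nat \<Rightarrow> nat"
  assumes "D \<noteq> {}" and "convex D" and "closed D" and "bounded D"
    and "\<And>z. (f has_derivative (\<lambda>h. f' z \<bullet> h)) (at z)"
    and "continuous_on UNIV f'"
    and "cgms_run D f f' \<beta> \<tau> x y lam l"
  shows "(\<exists>p. limit_point_seq x p \<and> p \<in> stationary_set D f')
    \<and> (pseudo_convex_on D f f' \<longrightarrow>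
         (\<forall>p. limit_point_seq x p \<longrightarrow> p \<in> solution_set D f)
         \<and> (\<lambda>k. f (x k)) \<longlonglongrightarrow> opt_value D f)"
proof -
  interpret cg D f f' \<beta> \<tau> x y lam l using assms by unfold_locales
  show ?thesis using part1 part2_pts part2_lim by blast
qed

end
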